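(* Let $\delta>0$. Then: (a) for $d>c>0$ and $a>0$, the function $x\mapsto {}_1F_1(a;c+\delta;x)\,{}_1F_1(a;d;x)-{}_1F_1(a;d+\delta;x)\,{}_1F_1(a;c;x)$ has negative power series coefficients, starting with the coefficient at $x$; (b) the function $c\mapsto {}_1F_1(a;c+\delta;x)/{}_1F_1(a;c;x)$ is monotone increasing on $(0,\infty)$ (equivalently, $c\mapsto {}_1F_1(a;c;x)$ is log-convex there) for fixed $a>0,x>0$ or for fixed $a<0,x<0$; (c) the inequality ${}_1F_1(a+\delta;c+\delta;x)^2\le {}_1F_1(a+2\delta;c+2\delta;x)\,{}_1F_1(a;c;x)$ holds for $a\ge c>0$, $x>0$, and for $a\le c$, $c>0$, $x\le 0$; so that $\mu\mapsto{}_1F_1(a+\mu;c+\mu;x)$ is log-convex on $[0,\infty)$ under these restrictions on the parameters; (d) for $c>d>0$, $a>0$ and every integer $m\ge1$, \[ {}_4F_3\left(\begin{matrix}-m,\ -d-m,\ a,\ 1-cm/(c+d)\\ 1-a-m,\ c+1,\ -cm/(c+d)\end{matrix}\,\middle|\,-1\right)>0, \] and for $d>c>0$ the sign of this inequality is reversed.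
   Context: $(a)_k=a(a+1)\cdots(a+k-1)$ is the Pochhammer symbol. ${}_1F_1(a;c;x)=\sum_{k\ge0}\frac{(a)_k}{(c)_k}\frac{x^k}{k!}$. The generalized hypergeometric function is ${}_pF_q\left(\begin{matrix}a_1,\dots,a_p\\ b_1,\dots,b_q\end{matrix}\middle|x\right)=\sum_{n\ge0}\frac{(a_1)_n\cdots(a_p)_n}{(b_1)_n\cdots(b_q)_n}\frac{x^n}{n!}$, terminating at $n=m$ when an upper parameter equals $-m$. *)

theory Defs
  imports "HOL-Analysis.Analysis"
begin

definition hyp1F1 :: "real \<Rightarrow> real \<Rightarrow> real \<Rightarrow> real" where
  "hyp1F1 a c x = (\<Sum>k. pochhammer a k / pochhammer c k * x ^ k / fact k)"

text \<open>The terminating 4F3 of part (d):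
  4F3(-m, -d-m, a, 1-t ; 1-a-m, c+1, -t | -1) with t = c m/(c+d).
  The ratio of Pochhammer symbols (1-t)_n / (-t)_n is the polynomial (t-n)/t
  (it is written in that cancelled form so that the sum is also meaningful when
  t happens to be an integer < m, where both symbols vanish).\<close>
definition hyp4F3_d :: "real \<Rightarrow> real \<Rightarrow> real \<Rightarrow> nat \<Rightarrow> real" where
  "hyp4F3_d a c d m =
     (let t = c * real m / (c + d) in
      \<Sum>n = 0..m. pochhammer (- real m) n * pochhammer (- d - real m) n * pochhammer a n
                   / (pochhammer (1 - a - real m) n * pochhammer (c + 1) n)
                   * ((t - real n) / t) * (-1) ^ n / fact n)"

end

theory Submission
  imports Defs
begin

lemma half_aux: "2*(t::real) \<le> s \<Longrightarrow> t \<le> s/2" by simp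

lemma alg3:
  fixes pa pa' pc pc' xx x f f' al ga nu :: real
  assumes "pa' = pa*al" "pc' = pc*ga" "f' = f*nu" "pc\<noteq>0" "ga\<noteq>0" "f\<noteq>0" "nu\<noteq>0"
  shows "pa'/pc'*(x*xx)/f' = (pa/pc*xx/f) * (al/ga*x/nu)"
  using assms by (simp add: field_simps)

lemma term_summable:
  fixes a c x :: real
  assumes c: "c > 0"
  shows "summable (\<lambda>k. norm (pochhammer a k / pochhammer c k * x^k / fact k))"
proof (rule summable_ratio_test[where c="1/2" and N="Suc (nat \<lceil>2*(\<bar>a\<bar>+1)*\<bar>x\<bar>\<rceil>)"])
  fix n assume n: "n \<ge> Suc (nat \<lceil>2*(\<bar>a\<bar>+1)*\<bar>x\<bar>\<rceil>)"
  have n1: "real n \<ge> 1" using n by auto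
  have nb: "real n + 1 \<ge> 2*(\<bar>a\<bar>+1)*\<bar>x\<bar>" using n by linarith
  have pc: "pochhammer c n > 0" using c pochhammer_pos by blast
  have cn: "c + real n > 0" using c by simp
  have r1: "\<bar>a + real n\<bar> \<le> (\<bar>a\<bar>+1) * (c + real n)"
  proof -
    have "\<bar>a + real n\<bar> \<le> \<bar>a\<bar> + real n" by simp
    also have "\<dots> \<le> (\<bar>a\<bar>+1) * real n"
    proof -
      have "\<bar>a\<bar> * 1 \<le> \<bar>a\<bar> * real n" by (rule mult_left_mono) (use n1 in auto)
      thus ?thesis by (simp add: algebra_simps)
    qed
    also have "\<dots> \<le> (\<bar>a\<bar>+1) * (c + real n)" using c by (intro mult_left_mono) auto
    finally show ?thesis .
  qed
  have r2: "\<bar>a + real n\<bar> / (c + real n) * \<bar>x\<bar> / (real n + 1) \<le> 1/2"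
  proof -
    have "\<bar>a + real n\<bar> / (c + real n) \<le> \<bar>a\<bar>+1" using r1 by (simp add: pos_divide_le_eq[OF cn] mult.commute)
    hence "\<bar>a + real n\<bar> / (c + real n) * \<bar>x\<bar> \<le> (\<bar>a\<bar>+1) * \<bar>x\<bar>" by (intro mult_right_mono) auto
    also have "\<dots> \<le> (real n + 1)/2"
    proof -
      have "2*((\<bar>a\<bar>+1) * \<bar>x\<bar>) \<le> real n + 1" using nb by (metis mult.assoc)
      thus ?thesis using half_aux by blast
    qed
    finally have "\<bar>a + real n\<bar> / (c + real n) * \<bar>x\<bar> / (real n + 1) \<le> ((real n + 1)/2) / (real n + 1)"
      by (rule divide_right_mono) simp
    moreover have e: "((real n + 1)/2) / (real n + 1) = 1/2" by (simp add: field_simps)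
    ultimately show ?thesis by (simp only: e)
  qed
  have eq: "norm (pochhammer a (Suc n) / pochhammer c (Suc n) * x^(Suc n) / fact (Suc n))
      = norm (pochhammer a n / pochhammer c n * x^n / fact n) * (\<bar>a + real n\<bar> / (c + real n) * \<bar>x\<bar> / (real n + 1))"
  proof -
    have "pochhammer a (Suc n) / pochhammer c (Suc n) * x^(Suc n) / fact (Suc n)
      = (pochhammer a n / pochhammer c n * x^n / fact n) * ((a + real n) / (c + real n) * x / (real n + 1))"
      unfolding power_Suc by (rule alg3) (use pc cn in \<open>simp_all add: pochhammer_Suc\<close>)
    also have "norm \<dots> = norm (pochhammer a n / pochhammer c n * x^n / fact n) * (\<bar>a + real n\<bar> / (c + real n) * \<bar>x\<bar> / (real n + 1))"
      using cn by (simp add: abs_mult abs_divide)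
    finally show ?thesis .
  qed
  define Y where "Y = norm (pochhammer a n / pochhammer c n * x^n / fact n)"
  define R where "R = \<bar>a + real n\<bar> / (c + real n) * \<bar>x\<bar> / (real n + 1)"
  have "Y * R \<le> Y * (1/2)" by (rule mult_left_mono[OF r2[folded R_def]]) (simp add: Y_def)
  have Y0: "Y \<ge> 0" by (simp add: Y_def)
  have R0: "R \<ge> 0" using cn by (simp add: R_def)
  have e1: "norm (norm (pochhammer a (Suc n) / pochhammer c (Suc n) * x^(Suc n) / fact (Suc n)))
     = norm (pochhammer a (Suc n) / pochhammer c (Suc n) * x^(Suc n) / fact (Suc n))" by simp
  have e2: "norm (norm (pochhammer a n / pochhammer c n * x^n / fact n)) = norm (pochhammer a n / pochhammer c n * x^n / fact n)" by simp
  from \<open>Y * R \<le> Y * (1/2)\<close> show "norm (norm (pochhammer a (Suc n) / pochhammer c (Suc n) * x^(Suc n) / fact (Suc n)))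
      \<le> 1/2 * norm (norm (pochhammer a n / pochhammer c n * x^n / fact n))"
    unfolding e1 e2 eq Y_def[symmetric] R_def[symmetric] using Y0 R0 by (simp add: mult.commute abs_of_nonneg)
qed simp


lemma sum_rev_atMost: fixes f :: "nat \<Rightarrow> 'a::comm_monoid_add" shows "(\<Sum>i\<le>n. f i) = (\<Sum>i\<le>n. f (n - i))"
  using sum.atLeastAtMost_rev[of f 0 n] by (simp add: atMost_atLeast0)

lemma alg1:
  fixes V U c X b m :: real
  assumes r: "V*(c+m) = c*U" and V: "V>0" and U: "U>0" and c: "c>0"
  shows "X/V - (b/c)*(X/U) = X*(c-b+m)/(c*U)"
proof -
  have cm: "c + m \<noteq> 0" using r V U c by auto
  have "X/V = X*(c+m)/(V*(c+m))" using cm V by simp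
  also have "\<dots> = X*(c+m)/(c*U)" using r by simp
  finally have "X/V = X*(c+m)/(c*U)" .
  moreover have "(b/c)*(X/U) = b*X/(c*U)" by simp
  ultimately show ?thesis by (simp add: diff_divide_distrib algebra_simps)
qed

lemma cv_identity:
  fixes b c :: real
  assumes "c > 0"
  shows "(\<Sum>j\<le>n. of_nat (n choose j) * (-1)^j * pochhammer b j / pochhammer c j)
         = pochhammer (c - b) n / pochhammer c n"
  using assms
proof (induction n arbitrary: b c)
  case 0
  then show ?case by simp
next
  case (Suc n)
  define f where "f = (\<lambda>n b c j. of_nat (n choose j) * (-1::real)^j * pochhammer b j / pochhammer c j)"
  have c0: "c > 0" by fact
  have IH1: "(\<Sum>j\<le>n. f n b c j) = pochhammer (c - b) n / pochhammer c n"
    using Suc.IH[OF c0] by (simp add: f_def)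
  have IH2: "(\<Sum>j\<le>n. f n (b+1) (c+1) j) = pochhammer (c - b) n / pochhammer (c+1) n"
    using Suc.IH[of "c+1" "b+1"] c0 by (simp add: f_def)
  have step: "f (Suc n) b c (Suc j) = f n b c (Suc j) - (b/c) * f n (b+1) (c+1) j" for j
  proof -
    have pc: "pochhammer (c+1) j > 0" using c0 by (intro pochhammer_pos) simp
    show ?thesis unfolding f_def using c0 pc
      by (simp add: pochhammer_rec field_simps)
  qed
  have "(\<Sum>j\<le>Suc n. f (Suc n) b c j) = f (Suc n) b c 0 + (\<Sum>j\<le>n. f (Suc n) b c (Suc j))"
    by (rule sum.atMost_Suc_shift)
  also have "(\<Sum>j\<le>n. f (Suc n) b c (Suc j)) = (\<Sum>j\<le>n. f n b c (Suc j) - (b/c) * f n (b+1) (c+1) j)"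
    by (rule sum.cong) (simp_all only: step)
  also have "\<dots> = (\<Sum>j\<le>n. f n b c (Suc j)) - (b/c) * (\<Sum>j\<le>n. f n (b+1) (c+1) j)"
    by (simp only: sum_subtractf sum_distrib_left)
  also have "f (Suc n) b c 0 + ((\<Sum>j\<le>n. f n b c (Suc j)) - (b/c) * (\<Sum>j\<le>n. f n (b+1) (c+1) j))
      = (f n b c 0 + (\<Sum>j\<le>n. f n b c (Suc j))) - (b/c) * (\<Sum>j\<le>n. f n (b+1) (c+1) j)"
    by (simp add: f_def)
  also have "f n b c 0 + (\<Sum>j\<le>n. f n b c (Suc j)) = (\<Sum>j\<le>Suc n. f n b c j)"
    by (rule sum.atMost_Suc_shift[symmetric])
  also have "\<dots> = (\<Sum>j\<le>n. f n b c j)"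
    by (simp add: f_def)
  finally have "(\<Sum>j\<le>Suc n. f (Suc n) b c j) = pochhammer (c - b) n / pochhammer c n - (b/c) * (pochhammer (c - b) n / pochhammer (c+1) n)"
    using IH1 IH2 by simp
  also have "\<dots> = pochhammer (c - b) (Suc n) / pochhammer c (Suc n)"
  proof -
    have p1: "pochhammer (c+1) n > 0" using c0 by (intro pochhammer_pos) simp
    have p2: "pochhammer c n > 0" using c0 by (intro pochhammer_pos) simp
    have r: "c * pochhammer (c+1) n = pochhammer c n * (c + real n)"
      using pochhammer_rec[of c n] pochhammer_Suc[of c n] by simp
    have "pochhammer c (Suc n) = c * pochhammer (c+1) n" by (simp add: pochhammer_rec)
    moreover have "pochhammer (c - b) (Suc n) = pochhammer (c - b) n * (c - b + real n)" by (simp add: pochhammer_Suc)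
    ultimately show ?thesis using alg1[OF r[symmetric] p2 p1 c0] by simp
  qed
  finally show ?case by (simp add: f_def)
qed

lemma exp_sums_real: "(\<lambda>n. x^n / fact n) sums exp (x::real)"
  using exp_converges[of x] by (simp add: divide_inverse mult.commute)

lemma alg2:
  fixes xk xa xb fk fa fb pp qq sg :: real
  assumes "xk = xa*xb" "fk \<noteq> 0" "fa \<noteq> 0" "fb \<noteq> 0"
  shows "xa/fa * (pp/qq * (sg * xb)/fb) = xk/fk*(fk/(fb*fa) * sg * pp/qq)"
  using assms by (simp add: field_simps)

lemma kummer:
  fixes a c x :: real
  assumes c: "c > 0"
  shows "hyp1F1 a c x = exp x * hyp1F1 (c - a) c (-x)"
proof -
  define e where "e = (\<lambda>k. x^k / fact k)"
  define t where "t = (\<lambda>k. pochhammer (c-a) k / pochhammer c k * (-x)^k / fact k)"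
  have se: "summable (\<lambda>k. norm (e k))"
  proof -
    have "e = (\<lambda>k. pochhammer 1 k / pochhammer 1 k * x^k / fact k)"
      by (auto simp: e_def fun_eq_iff pochhammer_fact[symmetric])
    thus ?thesis using term_summable[of 1 1 x] by simp
  qed
  have st: "summable (\<lambda>k. norm (t k))" unfolding t_def by (rule term_summable[OF c])
  have "(\<lambda>k. \<Sum>i\<le>k. e i * t (k - i)) sums ((\<Sum>k. e k) * (\<Sum>k. t k))"
    by (rule Cauchy_product_sums[OF se st])
  moreover have "(\<Sum>k. e k) = exp x" unfolding e_def using exp_sums_real[of x] by (simp add: sums_iff)
  moreover have "(\<Sum>k. t k) = hyp1F1 (c - a) c (-x)" by (simp add: t_def hyp1F1_def)
  moreover have "(\<lambda>k. \<Sum>i\<le>k. e i * t (k - i)) = (\<lambda>k. pochhammer a k / pochhammer c k * x^k / fact k)"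
  proof
    fix k
    have "(\<Sum>i\<le>k. e i * t (k - i)) = (\<Sum>i\<le>k. e (k - i) * t i)"
      by (subst sum_rev_atMost) simp
    also have "\<dots> = (\<Sum>j\<le>k. x^k / fact k * (of_nat (k choose j) * (-1)^j * pochhammer (c-a) j / pochhammer c j))"
    proof (rule sum.cong[OF refl])
      fix j assume "j \<in> {..k}"
      hence jk: "j \<le> k" by simp
      have xp: "x^(k-j) * x^j = x^k" using jk by (simp add: power_add[symmetric])
      have "e (k - j) * t j = x^(k-j) / fact (k-j) * (pochhammer (c-a) j / pochhammer c j * ((-1)^j * x^j) / fact j)"
        unfolding e_def t_def power_minus[of x j] by simp
      also have "\<dots> = x^k / fact k * (fact k / (fact j * fact (k-j)) * (-1)^j * pochhammer (c-a) j / pochhammer c j)"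
        by (rule alg2[OF xp[symmetric]]) simp_all
      also have "\<dots> = x^k / fact k * (of_nat (k choose j) * (-1)^j * pochhammer (c-a) j / pochhammer c j)"
        by (simp only: binomial_fact[OF jk])
      finally show "e (k - j) * t j = x^k / fact k * (of_nat (k choose j) * (-1)^j * pochhammer (c-a) j / pochhammer c j)" .
    qed
    also have "\<dots> = x^k / fact k * (\<Sum>j\<le>k. of_nat (k choose j) * (-1)^j * pochhammer (c-a) j / pochhammer c j)"
      by (simp add: sum_distrib_left)
    also have "\<dots> = x^k / fact k * (pochhammer (c - (c-a)) k / pochhammer c k)"
      by (simp only: cv_identity[OF c])
    also have "\<dots> = pochhammer a k / pochhammer c k * x^k / fact k" by (simp add: mult.commute mult.left_commute)
    finally show "(\<Sum>i\<le>k. e i * t (k - i)) = pochhammer a k / pochhammer c k * x^k / fact k" .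
  qed
  ultimately have "(\<lambda>k. pochhammer a k / pochhammer c k * x^k / fact k) sums (exp x * hyp1F1 (c - a) c (-x))"
    by simp
  thus ?thesis by (simp add: hyp1F1_def sums_iff)
qed


lemma convex_on_cong':
  fixes f g :: "real \<Rightarrow> real"
  assumes "convex_on S f" "\<And>x. x \<in> S \<Longrightarrow> f x = g x"
  shows "convex_on S g"
proof (rule convex_onI)
  show "convex S" using assms(1) convex_on_imp_convex by blast
  fix t x y :: real assume t: "0 < t" "t < 1" and xy: "x \<in> S" "y \<in> S"
  have "(1 - t) *\<^sub>R x + t *\<^sub>R y \<in> S"
    using \<open>convex S\<close> xy t by (intro convexD) auto
  thus "g ((1 - t) *\<^sub>R x + t *\<^sub>R y) \<le> (1 - t) * g x + t * g y"
    using convex_onD[OF assms(1), of t x y] t xy assms(2) by auto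
qed

lemma logconv_suminf:
  fixes g :: "nat \<Rightarrow> real \<Rightarrow> real" and S :: "real set"
  assumes S: "convex S"
    and nn: "\<And>k t. t \<in> S \<Longrightarrow> g k t \<ge> 0"
    and sm: "\<And>t. t \<in> S \<Longrightarrow> summable (\<lambda>k. g k t)"
    and pos: "\<And>t. t \<in> S \<Longrightarrow> (\<Sum>k. g k t) > 0"
    and lc: "\<And>k. (\<forall>t\<in>S. g k t = 0) \<or> ((\<forall>t\<in>S. g k t > 0) \<and> convex_on S (\<lambda>t. ln (g k t)))"
  shows "convex_on S (\<lambda>t. ln (\<Sum>k. g k t))"
proof (rule convex_onI[OF _ S])
  fix u x y :: real assume u: "0 < u" "u < 1" and xy: "x \<in> S" "y \<in> S"
  define z where "z = (1 - u) *\<^sub>R x + u *\<^sub>R y"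
  have zS: "z \<in> S" unfolding z_def using S xy u by (intro convexD) auto
  define A where "A = (\<Sum>k. g k x)"
  define B where "B = (\<Sum>k. g k y)"
  have A0: "A > 0" using pos xy by (simp add: A_def)
  have B0: "B > 0" using pos xy by (simp add: B_def)
  define M where "M = exp ((1-u) * ln A + u * ln B)"
  have M0: "M > 0" by (simp add: M_def)
  have bound: "g k z \<le> M * ((1-u) * (g k x / A) + u * (g k y / B))" for k
  proof (cases "\<forall>t\<in>S. g k t = 0")
    case True
    then show ?thesis using xy zS by simp
  next
    case False
    with lc[of k] have gp: "\<forall>t\<in>S. g k t > 0" and cv: "convex_on S (\<lambda>t. ln (g k t))" by auto
    have px: "g k x > 0" and py: "g k y > 0" and pz: "g k z > 0" using gp xy zS by auto
    have l1: "ln (g k z) \<le> (1-u) * ln (g k x) + u * ln (g k y)"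
      using convex_onD[OF cv, of u x y] u xy unfolding z_def by simp
    have e1: "(1-u) * ln (g k x) + u * ln (g k y)
        = ((1-u) * ln A + u * ln B) + ((1-u) * ln (g k x / A) + u * ln (g k y / B))"
      using px py A0 B0 by (simp add: ln_div algebra_simps)
    have "g k z = exp (ln (g k z))" using pz by simp
    also have "\<dots> \<le> exp ((1-u) * ln (g k x) + u * ln (g k y))" using l1 by simp
    also have "\<dots> = M * exp ((1-u) * ln (g k x / A) + u * ln (g k y / B))"
      unfolding e1 M_def by (simp add: exp_add)
    also have "exp ((1-u) * ln (g k x / A) + u * ln (g k y / B))
        \<le> (1-u) * exp (ln (g k x / A)) + u * exp (ln (g k y / B))"
      using convex_onD[OF exp_convex, of u "ln (g k x / A)" "ln (g k y / B)"] u by simp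
    also have "\<dots> = (1-u) * (g k x / A) + u * (g k y / B)" using px py A0 B0 by simp
    finally show ?thesis using M0 by (simp add: mult_left_mono)
  qed
  have sR: "(\<lambda>k. M * ((1-u) * (g k x / A) + u * (g k y / B))) sums (M * ((1-u) * (A / A) + u * (B / B)))"
    unfolding A_def B_def
    by (intro sums_mult sums_add sums_divide summable_sums sm xy)
  have "(\<Sum>k. g k z) \<le> (\<Sum>k. M * ((1-u) * (g k x / A) + u * (g k y / B)))"
    by (rule suminf_le[OF bound sm[OF zS] sums_summable[OF sR]])
  also have "\<dots> = M" using sums_unique[OF sR] A0 B0 by simp
  finally have le: "(\<Sum>k. g k z) \<le> M" .
  have "ln (\<Sum>k. g k z) \<le> ln M" using le pos[OF zS] M0 by simp
  also have "ln M = (1-u) * ln A + u * ln B" by (simp add: M_def)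
  finally show "ln (\<Sum>k. g k ((1 - u) *\<^sub>R x + u *\<^sub>R y)) \<le> (1 - u) * ln (\<Sum>k. g k x) + u * ln (\<Sum>k. g k y)"
    unfolding z_def A_def B_def .
qed

lemma convex_shift:
  fixes f :: "real \<Rightarrow> real"
  assumes cv: "convex_on S f" and S: "x1 \<in> S" "x2 + d \<in> S" and le: "x1 \<le> x2" and d: "d > 0"
  shows "f (x1 + d) + f x2 \<le> f x1 + f (x2 + d)"
proof -
  define L where "L = x2 + d - x1"
  have L0: "L > 0" using le d by (simp add: L_def)
  define l where "l = d / L"
  have l0: "0 \<le> l" "l \<le> 1" using L0 d le by (auto simp: l_def L_def field_simps)
  have lL: "l * L = d" using L0 by (simp add: l_def)
  have "(1 - l) *\<^sub>R x1 + l *\<^sub>R (x2 + d) = x1 + l * L" by (simp add: L_def algebra_simps)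
  hence p1: "(1 - l) *\<^sub>R x1 + l *\<^sub>R (x2 + d) = x1 + d" using lL by simp
  have "(1 - (1 - l)) *\<^sub>R x1 + (1 - l) *\<^sub>R (x2 + d) = x2 + d - l * L" by (simp add: L_def algebra_simps)
  hence p2: "(1 - (1 - l)) *\<^sub>R x1 + (1 - l) *\<^sub>R (x2 + d) = x2" using lL by simp
  have i1: "f (x1 + d) \<le> (1 - l) * f x1 + l * f (x2 + d)"
    using convex_onD[OF cv, of l x1 "x2 + d"] l0 S unfolding p1 by simp
  have i2: "f x2 \<le> (1 - (1 - l)) * f x1 + (1 - l) * f (x2 + d)"
    using convex_onD[OF cv, of "1 - l" x1 "x2 + d"] l0 S unfolding p2 by simp
  show ?thesis using i1 i2 by (simp add: algebra_simps)
qed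

lemma convex_neg_ln:
  fixes S :: "real set"
  assumes S: "convex S" and pos: "\<And>t. t \<in> S \<Longrightarrow> t + g > 0"
  shows "convex_on S (\<lambda>t. - ln (t + g))"
proof (rule convex_on_realI[where f' = "\<lambda>t. - 1 / (t + g)"])
  show "connected S" using S by (rule convex_connected)
  fix t assume "t \<in> S"
  hence tp: "t + g > 0" by (rule pos)
  show "((\<lambda>t. - ln (t + g)) has_real_derivative - 1 / (t + g)) (at t)"
    using tp by (auto intro!: derivative_eq_intros)
next
  fix t s assume "t \<in> S" "s \<in> S" "t \<le> s"
  hence "t + g > 0" "s + g > 0" "t + g \<le> s + g" using pos by auto
  thus "- 1 / (t + g) \<le> - 1 / (s + g)" by (simp add: frac_le)
qed

lemma convex_ln_ratio:
  fixes S :: "real set"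
  assumes S: "convex S" and pos: "\<And>t. t \<in> S \<Longrightarrow> t + g > 0" and bg: "b \<ge> g"
  shows "convex_on S (\<lambda>t. ln (t + b) - ln (t + g))"
proof (rule convex_on_realI[where f' = "\<lambda>t. 1 / (t + b) - 1 / (t + g)"])
  show "connected S" using S by (rule convex_connected)
  fix t assume "t \<in> S"
  hence tp: "t + g > 0" by (rule pos)
  hence tb: "t + b > 0" using bg by linarith
  show "((\<lambda>t. ln (t + b) - ln (t + g)) has_real_derivative 1 / (t + b) - 1 / (t + g)) (at t)"
    using tp tb by (auto intro!: derivative_eq_intros)
next
  fix t s assume "t \<in> S" "s \<in> S" "t \<le> s"
  hence tg: "t + g > 0" and sg: "s + g > 0" and ts: "t \<le> s" using pos by auto
  have tb: "t + b > 0" and sb: "s + b > 0" using tg sg bg by linarith+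
  have "1 / (t + b) - 1 / (s + b) = (s - t) / ((t + b) * (s + b))" using tb sb by (simp add: field_simps)
  also have "\<dots> \<le> (s - t) / ((t + g) * (s + g))"
  proof (rule divide_left_mono)
    show "(t + g) * (s + g) \<le> (t + b) * (s + b)" using tg sg bg by (intro mult_mono) auto
  qed (use ts tg sg tb sb in \<open>auto intro!: mult_pos_pos\<close>)
  also have "\<dots> = 1 / (t + g) - 1 / (s + g)" using tg sg by (simp add: field_simps)
  finally show "1 / (t + b) - 1 / (t + g) \<le> 1 / (s + b) - 1 / (s + g)" by simp
qed

lemma term_logconv:
  fixes A C :: "real \<Rightarrow> real" and y :: real and S :: "real set"
  assumes S: "convex S" and Ap: "\<And>t j. t \<in> S \<Longrightarrow> A t + real j > 0"
    and Cp: "\<And>t j. t \<in> S \<Longrightarrow> C t + real j > 0" and y: "y > 0"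
    and cv: "\<And>j. convex_on S (\<lambda>t. ln (A t + real j) - ln (C t + real j))"
  shows "convex_on S (\<lambda>t. ln (pochhammer (A t) k / pochhammer (C t) k * y^k / fact k))"
proof (induction k)
  case 0
  show ?case using S by (simp add: convex_on_const)
next
  case (Suc k)
  have cst: "convex_on S (\<lambda>t. ln y - ln (real k + 1))" using S by (simp add: convex_on_const)
  have "convex_on S (\<lambda>t. ln (pochhammer (A t) k / pochhammer (C t) k * y^k / fact k)
      + ((ln (A t + real k) - ln (C t + real k)) + (ln y - ln (real k + 1))))"
    by (intro convex_on_add Suc.IH cv cst)
  then show ?case
  proof (rule convex_on_cong')
    fix t assume t: "t \<in> S"
    have a0: "A t + real k > 0" and c0: "C t + real k > 0" using Ap[OF t] Cp[OF t] by auto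
    have pa: "pochhammer (A t) k > 0" using Ap[OF t, of 0] by (intro pochhammer_pos) simp
    have pc: "pochhammer (C t) k > 0" using Cp[OF t, of 0] by (intro pochhammer_pos) simp
    have "pochhammer (A t) (Suc k) / pochhammer (C t) (Suc k) * y^(Suc k) / fact (Suc k)
      = (pochhammer (A t) k / pochhammer (C t) k * y^k / fact k) * ((A t + real k) / (C t + real k) * y / (real k + 1))"
      unfolding power_Suc by (rule alg3) (use pc c0 in \<open>simp_all add: pochhammer_Suc\<close>)
    moreover have "pochhammer (A t) k / pochhammer (C t) k * y^k / fact k > 0" using pa pc y by simp
    moreover have "(A t + real k) / (C t + real k) * y / (real k + 1) > 0" using a0 c0 y by simp
    ultimately show "ln (pochhammer (A t) k / pochhammer (C t) k * y^k / fact k)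
      + ((ln (A t + real k) - ln (C t + real k)) + (ln y - ln (real k + 1)))
      = ln (pochhammer (A t) (Suc k) / pochhammer (C t) (Suc k) * y^(Suc k) / fact (Suc k))"
      using a0 c0 y pa pc by (simp add: ln_mult ln_div)
  qed
qed


definition P1 :: "real \<Rightarrow> nat \<Rightarrow> real" where "P1 a k = pochhammer a k / fact k"

definition cp :: "real \<Rightarrow> real \<Rightarrow> real \<Rightarrow> nat \<Rightarrow> real" where
  "cp a c d n = (\<Sum>i\<le>n. P1 a i * P1 a (n - i) / (pochhammer c i * pochhammer d (n - i)))"

definition coef :: "real \<Rightarrow> real \<Rightarrow> real \<Rightarrow> real \<Rightarrow> nat \<Rightarrow> real" where
  "coef a c d e n = (\<Sum>i\<le>n. P1 a i * P1 a (n - i) *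
      (1 / (pochhammer (c + e) i * pochhammer d (n - i)) - 1 / (pochhammer (d + e) i * pochhammer c (n - i))))"

lemma alg4:
  fixes xn xi xj pa pb pc pd fi fj :: real
  assumes "xn = xi * xj" "pc \<noteq> 0" "pd \<noteq> 0" "fi \<noteq> 0" "fj \<noteq> 0"
  shows "pa / pc * xi / fi * (pb / pd * xj / fj) = (pa / fi) * (pb / fj) / (pc * pd) * xn"
  using assms by (simp add: field_simps)

lemma cp_sums:
  fixes a c d x :: real
  assumes c: "c > 0" and d: "d > 0"
  shows "(\<lambda>n. cp a c d n * x^n) sums (hyp1F1 a c x * hyp1F1 a d x)"
proof -
  define u where "u = (\<lambda>k. pochhammer a k / pochhammer c k * x^k / fact k)"
  define v where "v = (\<lambda>k. pochhammer a k / pochhammer d k * x^k / fact k)"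
  have "(\<lambda>k. \<Sum>i\<le>k. u i * v (k - i)) sums ((\<Sum>k. u k) * (\<Sum>k. v k))"
    unfolding u_def v_def by (rule Cauchy_product_sums[OF term_summable[OF c] term_summable[OF d]])
  moreover have "(\<lambda>k. \<Sum>i\<le>k. u i * v (k - i)) = (\<lambda>n. cp a c d n * x^n)"
  proof
    fix n
    have "(\<Sum>i\<le>n. u i * v (n - i)) = (\<Sum>i\<le>n. P1 a i * P1 a (n - i) / (pochhammer c i * pochhammer d (n - i)) * x^n)"
    proof (rule sum.cong[OF refl])
      fix i assume "i \<in> {..n}"
      hence "i \<le> n" by simp
      hence xn: "x^n = x^i * x^(n-i)" by (simp add: power_add[symmetric])
      have "pochhammer c i \<noteq> 0" "pochhammer d (n - i) \<noteq> 0"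
        using pochhammer_pos[OF c, of i] pochhammer_pos[OF d, of "n-i"] by auto
      then show "u i * v (n - i) = P1 a i * P1 a (n - i) / (pochhammer c i * pochhammer d (n - i)) * x^n"
        unfolding u_def v_def P1_def by (rule alg4[OF xn]) simp_all
    qed
    also have "\<dots> = cp a c d n * x^n" by (simp add: cp_def sum_distrib_right)
    finally show "(\<Sum>i\<le>n. u i * v (n - i)) = cp a c d n * x^n" .
  qed
  moreover have "(\<Sum>k. u k) = hyp1F1 a c x" "(\<Sum>k. v k) = hyp1F1 a d x"
    by (simp_all add: u_def v_def hyp1F1_def)
  ultimately show ?thesis by simp
qed

lemma coef_cp: "coef a c d e n = cp a (c + e) d n - cp a (d + e) c n"
  unfolding coef_def cp_def by (simp add: sum_subtractf[symmetric] algebra_simps)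

lemma coef_sums:
  fixes a c d e x :: real
  assumes c: "c > 0" and d: "d > 0" and e: "e > 0"
  shows "(\<lambda>n. coef a c d e n * x^n) sums
     (hyp1F1 a (c + e) x * hyp1F1 a d x - hyp1F1 a (d + e) x * hyp1F1 a c x)"
proof -
  have "(\<lambda>n. cp a (c + e) d n * x^n - cp a (d + e) c n * x^n) sums
     (hyp1F1 a (c + e) x * hyp1F1 a d x - hyp1F1 a (d + e) x * hyp1F1 a c x)"
    by (intro sums_diff cp_sums) (use c d e in auto)
  thus ?thesis by (simp add: coef_cp left_diff_distrib)
qed

lemma coef0: "coef a c d e 0 = 0"
  by (simp add: coef_def)

lemma rr_dec:
  fixes c e :: real
  assumes c: "c > 0" and e: "e > 0" and kl: "k \<le> l"
  shows "pochhammer c l / pochhammer (c + e) l \<le> pochhammer c k / pochhammer (c + e) k"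
proof -
  have "decseq (\<lambda>n. pochhammer c n / pochhammer (c + e) n)"
  proof (rule decseq_SucI)
    fix n
    have p1: "pochhammer c n > 0" "pochhammer (c + e) n > 0" using c e by (auto intro!: pochhammer_pos)
    have f: "(c + real n) / (c + e + real n) \<le> 1" using c e by simp
    have "pochhammer c (Suc n) / pochhammer (c + e) (Suc n)
        = (pochhammer c n / pochhammer (c + e) n) * ((c + real n) / (c + e + real n))"
      by (simp add: pochhammer_Suc)
    also have "\<dots> \<le> (pochhammer c n / pochhammer (c + e) n) * 1"
      using p1 f by (intro mult_left_mono) auto
    finally show "pochhammer c (Suc n) / pochhammer (c + e) (Suc n) \<le> pochhammer c n / pochhammer (c + e) n" by simp
  qed
  thus ?thesis using kl by (simp add: decseq_def)
qed

lemma frac_shift_less: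
  fixes c d e :: real
  assumes "0 < c" "c < d" "e > 0"
  shows "c / (c + e) < d / (d + e)"
  using assms by (simp add: field_simps)

lemma rr_mono:
  fixes c d e :: real
  assumes c: "c > 0" and cd: "c < d" and e: "e > 0"
  shows "pochhammer c k / pochhammer (c + e) k \<le> pochhammer d k / pochhammer (d + e) k"
    and "k \<ge> 1 \<Longrightarrow> pochhammer c k / pochhammer (c + e) k < pochhammer d k / pochhammer (d + e) k"
proof -
  have d: "d > 0" using c cd by simp
  have step: "pochhammer z (Suc n) / pochhammer (z + e) (Suc n)
        = (pochhammer z n / pochhammer (z + e) n) * ((z + real n) / (z + real n + e))" for z n
    by (simp add: pochhammer_Suc add_ac)
  have fl: "(c + real n) / (c + real n + e) < (d + real n) / (d + real n + e)" for n
    using c cd e by (intro frac_shift_less) auto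
  have pos: "pochhammer z n / pochhammer (z + e) n > 0" if "z > 0" for z n
    using that e by (auto intro!: pochhammer_pos divide_pos_pos)
  have le: "pochhammer c k / pochhammer (c + e) k \<le> pochhammer d k / pochhammer (d + e) k" for k
  proof (induction k)
    case 0 then show ?case by simp
  next
    case (Suc n)
    have "pochhammer c (Suc n) / pochhammer (c + e) (Suc n)
        = (pochhammer c n / pochhammer (c + e) n) * ((c + real n) / (c + real n + e))" by (rule step)
    also have "\<dots> \<le> (pochhammer d n / pochhammer (d + e) n) * ((d + real n) / (d + real n + e))"
      using Suc.IH fl[of n] pos[OF c, of n] c e by (intro mult_mono) (auto intro!: less_imp_le)
    also have "\<dots> = pochhammer d (Suc n) / pochhammer (d + e) (Suc n)" by (rule step[symmetric])
    finally show ?case .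
  qed
  show "pochhammer c k / pochhammer (c + e) k \<le> pochhammer d k / pochhammer (d + e) k" by (rule le)
  assume "k \<ge> 1"
  then obtain n where k: "k = Suc n" by (cases k) auto
  have "pochhammer c (Suc n) / pochhammer (c + e) (Suc n)
      = (pochhammer c n / pochhammer (c + e) n) * ((c + real n) / (c + real n + e))" by (rule step)
  also have "\<dots> \<le> (pochhammer d n / pochhammer (d + e) n) * ((c + real n) / (c + real n + e))"
    using le[of n] c e by (intro mult_right_mono) auto
  also have "\<dots> < (pochhammer d n / pochhammer (d + e) n) * ((d + real n) / (d + real n + e))"
    using fl[of n] pos[OF d, of n] by (intro mult_strict_left_mono) auto
  also have "\<dots> = pochhammer d (Suc n) / pochhammer (d + e) (Suc n)" by (rule step[symmetric])
  finally show "pochhammer c k / pochhammer (c + e) k < pochhammer d k / pochhammer (d + e) k" unfolding k .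
qed

lemma cross:
  fixes c d :: real
  assumes c: "c > 0" and cd: "c < d" and kl: "k \<le> l"
  shows "pochhammer c l * pochhammer d k \<le> pochhammer c k * pochhammer d l"
proof -
  have d: "d > 0" using c cd by simp
  have "decseq (\<lambda>n. pochhammer c n / pochhammer d n)"
  proof (rule decseq_SucI)
    fix n
    have p1: "pochhammer c n > 0" "pochhammer d n > 0" using c d by (auto intro!: pochhammer_pos)
    have f: "(c + real n) / (d + real n) \<le> 1" using c cd by simp
    have "pochhammer c (Suc n) / pochhammer d (Suc n)
        = (pochhammer c n / pochhammer d n) * ((c + real n) / (d + real n))"
      by (simp add: pochhammer_Suc)
    also have "\<dots> \<le> (pochhammer c n / pochhammer d n) * 1"
      using p1 f by (intro mult_left_mono) auto
    finally show "pochhammer c (Suc n) / pochhammer d (Suc n) \<le> pochhammer c n / pochhammer d n" by simp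
  qed
  hence "pochhammer c l / pochhammer d l \<le> pochhammer c k / pochhammer d k" using kl by (simp add: decseq_def)
  moreover have "pochhammer d l > 0" "pochhammer d k > 0" using d by (auto intro!: pochhammer_pos)
  ultimately show ?thesis by (simp add: field_simps)
qed

lemma alg_S:
  fixes X Y p q :: real
  assumes "X > 0" "Y \<ge> X" "q \<le> 0" "p + q < 0"
  shows "X * p + Y * q < 0"
proof -
  have "Y * q \<le> X * q" using assms by (intro mult_right_mono_neg) auto
  moreover have "X * (p + q) < 0" using assms by (intro mult_pos_neg) auto
  ultimately show ?thesis by (simp add: algebra_simps)
qed

lemma alg_S_eq:
  fixes ca cb da db cda cdb dda ddb :: real
  assumes "ca \<noteq> 0" "cb \<noteq> 0" "da \<noteq> 0" "db \<noteq> 0" "cda \<noteq> 0" "cdb \<noteq> 0" "dda \<noteq> 0" "ddb \<noteq> 0"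
  shows "(1 / (cda * db) - 1 / (dda * cb)) + (1 / (cdb * da) - 1 / (ddb * ca))
     = (1 / (ca * db)) * (ca / cda - db / ddb) + (1 / (cb * da)) * (cb / cdb - da / dda)"
  using assms by (simp add: field_simps)

lemma S_neg_le:
  fixes c d e :: real
  assumes c: "c > 0" and cd: "c < d" and e: "e > 0" and kl: "k \<le> l" and l: "l \<ge> 1"
  shows "(1 / (pochhammer (c + e) k * pochhammer d l) - 1 / (pochhammer (d + e) k * pochhammer c l))
       + (1 / (pochhammer (c + e) l * pochhammer d k) - 1 / (pochhammer (d + e) l * pochhammer c k)) < 0"
proof -
  have d: "d > 0" using c cd by simp
  have pp: "pochhammer z n > 0" if "z > (0::real)" for z n using that by (rule pochhammer_pos)
  note P = pp[OF c, of k] pp[OF c, of l] pp[OF d, of k] pp[OF d, of l]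
    pp[of "c+e" k] pp[of "c+e" l] pp[of "d+e" k] pp[of "d+e" l]
  have eq: "(1 / (pochhammer (c + e) k * pochhammer d l) - 1 / (pochhammer (d + e) k * pochhammer c l))
       + (1 / (pochhammer (c + e) l * pochhammer d k) - 1 / (pochhammer (d + e) l * pochhammer c k))
     = (1 / (pochhammer c k * pochhammer d l)) * (pochhammer c k / pochhammer (c + e) k - pochhammer d l / pochhammer (d + e) l)
       + (1 / (pochhammer c l * pochhammer d k)) * (pochhammer c l / pochhammer (c + e) l - pochhammer d k / pochhammer (d + e) k)"
    by (rule alg_S_eq) (use P c d e in auto)
  have X0: "1 / (pochhammer c k * pochhammer d l) > 0" using P by simp
  have YX: "1 / (pochhammer c k * pochhammer d l) \<le> 1 / (pochhammer c l * pochhammer d k)"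
    using cross[OF c cd kl] P by (intro divide_left_mono) (auto intro!: mult_pos_pos)
  have q: "pochhammer c l / pochhammer (c + e) l - pochhammer d k / pochhammer (d + e) k \<le> 0"
    using rr_dec[OF c e kl] rr_mono(1)[OF c cd e, of k] by linarith
  have pq: "(pochhammer c k / pochhammer (c + e) k - pochhammer d l / pochhammer (d + e) l)
     + (pochhammer c l / pochhammer (c + e) l - pochhammer d k / pochhammer (d + e) k) < 0"
    using rr_mono(1)[OF c cd e, of k] rr_mono(2)[OF c cd e l] by linarith
  show ?thesis unfolding eq by (rule alg_S[OF X0 YX q pq])
qed

lemma S_neg:
  fixes c d e :: real
  assumes c: "c > 0" and cd: "c < d" and e: "e > 0" and kl: "k + l \<ge> 1"
  shows "(1 / (pochhammer (c + e) k * pochhammer d l) - 1 / (pochhammer (d + e) k * pochhammer c l))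
       + (1 / (pochhammer (c + e) l * pochhammer d k) - 1 / (pochhammer (d + e) l * pochhammer c k)) < 0"
proof (cases "k \<le> l")
  case True
  then show ?thesis using S_neg_le[OF c cd e True] kl by simp
next
  case False
  then show ?thesis using S_neg_le[OF c cd e, of l k] kl by simp
qed

lemma coef_neg:
  fixes a c d e :: real
  assumes a: "a > 0" and c: "c > 0" and cd: "c < d" and e: "e > 0" and n: "n \<ge> 1"
  shows "coef a c d e n < 0"
proof -
  define w where "w = (\<lambda>i. P1 a i * P1 a (n - i))"
  define T where "T = (\<lambda>k l. 1 / (pochhammer (c + e) k * pochhammer d l) - 1 / (pochhammer (d + e) k * pochhammer c l))"
  have co: "coef a c d e n = (\<Sum>i\<le>n. w i * T i (n - i))" by (simp add: coef_def w_def T_def)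
  also have "\<dots> = (\<Sum>i\<le>n. w (n - i) * T (n - i) (n - (n - i)))" by (rule sum_rev_atMost)
  also have "\<dots> = (\<Sum>i\<le>n. w i * T (n - i) i)"
    by (rule sum.cong) (auto simp: w_def mult.commute)
  finally have co2: "coef a c d e n = (\<Sum>i\<le>n. w i * T (n - i) i)" .
  have "2 * coef a c d e n = (\<Sum>i\<le>n. w i * (T i (n - i) + T (n - i) i))"
    using co co2 by (simp add: sum.distrib distrib_left)
  also have "\<dots> < (\<Sum>i\<le>n. (0::real))"
  proof (rule sum_strict_mono)
    fix i assume "i \<in> {..n}"
    hence i: "i \<le> n" by simp
    have wp: "w i > 0" unfolding w_def P1_def using a by (auto intro!: mult_pos_pos divide_pos_pos pochhammer_pos)
    have "T i (n - i) + T (n - i) i < 0" unfolding T_def using S_neg[OF c cd e, of i "n - i"] i n by simp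
    thus "w i * (T i (n - i) + T (n - i) i) < 0" using wp by (simp add: mult_pos_neg)
  qed auto
  finally show ?thesis by simp
qed


lemma refl_poch:
  fixes z :: real
  assumes im: "i \<le> m"
  shows "pochhammer (1 - z - real m) i * pochhammer z (m - i) = (-1)^i * pochhammer z m"
proof -
  have e1: "1 - z - real m = - (z + real m - 1)" by simp
  have e2: "z + real m - 1 - real i + 1 = z + real (m - i)" using im by (simp add: of_nat_diff)
  have "pochhammer (1 - z - real m) i = (-1)^i * pochhammer (z + real (m - i)) i"
    unfolding e1 pochhammer_minus e2 ..
  moreover have "pochhammer z m = pochhammer z (m - i) * pochhammer (z + real (m - i)) i"
    using pochhammer_product[of "m - i" m z] im by simp
  ultimately show ?thesis by (simp add: ac_simps)
qed

lemma div_helper: "(X::real) * Y = Z \<Longrightarrow> Y \<noteq> 0 \<Longrightarrow> X = Z / Y"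
  by (simp add: field_simps)

lemma alg_d:
  fixes A1 A2 fi fj C1 C0 D0 D1 Am fm Dm M N R s m d c t ri mi :: real
  assumes M: "M = s*fm/fj" and N: "N = s*Dm/D1" and R: "R = s*Am/A2" and s2: "s = 1 \<or> s = -1"
    and D0: "D0*(d+mi) = d*D1" and C0: "C0*(c+ri) = c*C1"
    and nz: "fi \<noteq> 0" "fj \<noteq> 0" "A2 \<noteq> 0" "Am \<noteq> 0" "fm \<noteq> 0" "Dm \<noteq> 0" "D1 \<noteq> 0" "C1 \<noteq> 0"
    and pos: "d > 0" "c > 0" "d + mi > 0" "c + ri > 0" "m > 0"
    and t: "t = c*m/(c+d)" and mi: "mi = m - ri"
  shows "A1/fi * (A2/fj) * (1/(C1*D0) - 1/(C0*D1))
       = (m/d) * (Am/(fm*Dm)) * (M*N*A1/(R*C1) * ((t-ri)/t) * s/fi)"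
proof -
  have D0': "D0 = d*D1/(d+mi)" using D0 pos by (simp add: field_simps)
  have C0': "C0 = c*C1/(c+ri)" using C0 pos by (simp add: field_simps)
  have L: "1/(C1*D0) - 1/(C0*D1) = (1/(C1*D1)) * ((d+mi)/d - (c+ri)/c)"
    unfolding D0' C0' using nz pos by (simp add: field_simps)
  have t0: "t > 0" using t pos by simp
  have e1: "(t - ri)/t = 1 - ri/t" using t0 by (simp add: field_simps)
  have e2: "ri/t = ri*(c+d)/(c*m)" unfolding t using pos by simp
  have e3: "(m/d)*(1 - ri*(c+d)/(c*m)) = m/d - ri*(c+d)/(c*d)" using pos by (simp add: field_simps)
  have e4: "(d+mi)/d - (c+ri)/c = m/d - ri*(c+d)/(c*d)" unfolding mi using pos by (simp add: field_simps)
  have K: "(m/d)*((t-ri)/t) = (d+mi)/d - (c+ri)/c" unfolding e1 e2 e3 e4 ..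
  have LHS: "A1/fi * (A2/fj) * (1/(C1*D0) - 1/(C0*D1)) = (A1*A2/(fi*fj*C1*D1)) * ((d+mi)/d - (c+ri)/c)"
    unfolding L by simp
  have RHS: "(m/d) * (Am/(fm*Dm)) * (M*N*A1/(R*C1) * ((t-ri)/t) * s/fi) = ((m/d)*((t-ri)/t)) * (A1*A2/(fi*fj*C1*D1))"
    unfolding M N R using nz s2 pos t0 by (elim disjE) (simp_all add: field_simps)
  show ?thesis unfolding LHS RHS K by (simp add: mult.commute)
qed

lemma coef_4F3:
  fixes a c d :: real
  assumes a: "a > 0" and c: "c > 0" and d: "d > 0" and m: "m \<ge> 1"
  shows "coef a c d 1 m = (real m / d) * (pochhammer a m / (fact m * pochhammer (d+1) m)) * hyp4F3_d a c d m"
proof -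
  define t where "t = c * real m / (c + d)"
  define K where "K = (real m / d) * (pochhammer a m / (fact m * pochhammer (d+1) m))"
  have pp: "pochhammer z n > 0" if "z > (0::real)" for z n using that by (rule pochhammer_pos)
  have cp2: "cp a (d + 1) c m = (\<Sum>i\<le>m. P1 a i * P1 a (m - i) / (pochhammer c i * pochhammer (d+1) (m - i)))"
  proof -
    have "cp a (d + 1) c m = (\<Sum>i\<le>m. P1 a (m - i) * P1 a (m - (m - i)) / (pochhammer (d+1) (m - i) * pochhammer c (m - (m - i))))"
      unfolding cp_def by (rule sum_rev_atMost)
    also have "\<dots> = (\<Sum>i\<le>m. P1 a i * P1 a (m - i) / (pochhammer c i * pochhammer (d+1) (m - i)))"
      by (rule sum.cong) (auto simp: mult.commute)
    finally show ?thesis .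
  qed
  have "coef a c d 1 m = (\<Sum>i\<le>m. P1 a i * P1 a (m - i) *
      (1 / (pochhammer (c + 1) i * pochhammer d (m - i)) - 1 / (pochhammer c i * pochhammer (d+1) (m - i))))"
    unfolding coef_cp cp2 unfolding cp_def sum_subtractf[symmetric]
    by (rule sum.cong) (simp_all add: right_diff_distrib)
  also have "\<dots> = (\<Sum>i\<le>m. K * (pochhammer (- real m) i * pochhammer (- d - real m) i * pochhammer a i
                   / (pochhammer (1 - a - real m) i * pochhammer (c + 1) i)
                   * ((t - real i) / t) * (-1) ^ i / fact i))"
  proof (rule sum.cong[OF refl])
    fix i assume "i \<in> {..m}"
    hence im: "i \<le> m" by simp
    have pa: "pochhammer a (m - i) > 0" "pochhammer a m > 0" using pp[OF a] by auto
    have pd: "pochhammer (d+1) (m - i) > 0" "pochhammer (d+1) m > 0" using pp[of "d+1"] d by auto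
    have pc: "pochhammer (c+1) i > 0" using pp[of "c+1"] c by auto
    have "pochhammer (- real m) i * fact (m - i) = (-1)^i * fact m"
      using refl_poch[OF im, of 1] unfolding pochhammer_fact[symmetric] by simp
    hence M: "pochhammer (- real m) i = (-1)^i * fact m / fact (m - i)" by (rule div_helper) simp
    have eN: "1 - (d + 1) - real m = - d - real m" by simp
    have "pochhammer (- d - real m) i * pochhammer (d+1) (m - i) = (-1)^i * pochhammer (d+1) m"
      using refl_poch[OF im, of "d+1"] unfolding eN .
    hence N: "pochhammer (- d - real m) i = (-1)^i * pochhammer (d+1) m / pochhammer (d+1) (m - i)"
      by (rule div_helper) (use pd in simp)
    have "pochhammer (1 - a - real m) i * pochhammer a (m - i) = (-1)^i * pochhammer a m"
      by (rule refl_poch[OF im])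
    hence R: "pochhammer (1 - a - real m) i = (-1)^i * pochhammer a m / pochhammer a (m - i)"
      by (rule div_helper) (use pa in simp)
    have s2: "((-1::real)^i) = 1 \<or> (-1::real)^i = -1" by (cases "even i") auto
    have rim: "real i \<le> real m" using im by simp
    have dm: "d + (real m - real i) > 0" using d rim by linarith
    have e: "real (m - i) = real m - real i" using im by (rule of_nat_diff)
    have D0: "pochhammer d (m - i) * (d + (real m - real i)) = d * pochhammer (d+1) (m - i)"
      using pochhammer_rec[of d "m - i"] pochhammer_Suc[of d "m - i"] unfolding e by simp
    have C0: "pochhammer c i * (c + real i) = c * pochhammer (c+1) i"
      using pochhammer_rec[of c i] pochhammer_Suc[of c i] by simp
    show "P1 a i * P1 a (m - i) *
      (1 / (pochhammer (c + 1) i * pochhammer d (m - i)) - 1 / (pochhammer c i * pochhammer (d+1) (m - i)))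
      = K * (pochhammer (- real m) i * pochhammer (- d - real m) i * pochhammer a i
                   / (pochhammer (1 - a - real m) i * pochhammer (c + 1) i)
                   * ((t - real i) / t) * (-1) ^ i / fact i)"
      unfolding P1_def K_def
      by (rule alg_d[OF M N R s2 D0 C0]) (use a c d m im pa pd pc dm in \<open>simp_all add: t_def\<close>)
  qed
  also have "\<dots> = K * hyp4F3_d a c d m"
    by (simp only: hyp4F3_d_def Let_def t_def[symmetric] atMost_atLeast0 sum_distrib_left)
  finally show ?thesis by (simp add: K_def)
qed

lemma coef_swap: "coef a d c e n = - coef a c d e n"
  by (simp add: coef_cp)

lemma pos_help: "(K::real) > 0 \<Longrightarrow> K * H > 0 \<Longrightarrow> H > 0"
  using zero_less_mult_pos by blast

lemma neg_help: "(K::real) > 0 \<Longrightarrow> K * H < 0 \<Longrightarrow> H < 0"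
  by (simp add: mult_less_0_iff)

lemma Kpos:
  fixes a d :: real
  assumes a: "a > 0" and d: "d > 0" and m: "m \<ge> 1"
  shows "(real m / d) * (pochhammer a m / (fact m * pochhammer (d+1) m)) > 0"
proof -
  have "pochhammer a m > 0" using a by (rule pochhammer_pos)
  moreover have "pochhammer (d+1) m > 0" using d by (intro pochhammer_pos) simp
  moreover have "real m > 0" using m by simp
  moreover have "(fact m :: real) > 0" by simp
  ultimately show ?thesis using d by (simp add: zero_less_mult_iff)
qed

lemma part_d:
  fixes a c d :: real
  assumes a: "a > 0" and m: "m \<ge> 1"
  shows "(c > d \<and> d > 0 \<longrightarrow> hyp4F3_d a c d m > 0) \<and> (d > c \<and> c > 0 \<longrightarrow> hyp4F3_d a c d m < 0)"
proof (intro conjI impI)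
  assume cd: "c > d \<and> d > 0"
  hence c: "c > 0" and d: "d > 0" and dc: "d < c" by auto
  have "coef a d c 1 m < 0" by (rule coef_neg[OF a d dc]) (use m in auto)
  hence "coef a c d 1 m > 0" using coef_swap[of a d c 1 m] by linarith
  thus "hyp4F3_d a c d m > 0" unfolding coef_4F3[OF a c d m] by (rule pos_help[OF Kpos[OF a d m]])
next
  assume cd: "d > c \<and> c > 0"
  hence c: "c > 0" and d: "d > 0" and dc: "c < d" by auto
  have "coef a c d 1 m < 0" by (rule coef_neg[OF a c dc]) (use m in auto)
  thus "hyp4F3_d a c d m < 0" unfolding coef_4F3[OF a c d m] by (rule neg_help[OF Kpos[OF a d m]])
qed


lemma poch_nonneg0:
  fixes z :: real
  assumes "z \<ge> 0"
  shows "pochhammer z k \<ge> 0"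
proof (cases "z = 0")
  case True then show ?thesis by (simp add: pochhammer_0_left)
next
  case False then show ?thesis using assms by (intro pochhammer_nonneg) simp
qed

lemma hyp_logconv:
  fixes A C :: "real \<Rightarrow> real" and y :: real and S :: "real set"
  assumes S: "convex S" and Cp: "\<And>t. t \<in> S \<Longrightarrow> C t > 0" and Ap: "\<And>t. t \<in> S \<Longrightarrow> A t \<ge> 0"
    and y: "y \<ge> 0"
    and alt: "((\<forall>t\<in>S. \<forall>j. A t + real j > 0) \<and> y > 0 \<and> (\<forall>j. convex_on S (\<lambda>t. ln (A t + real j) - ln (C t + real j))))
              \<or> (\<forall>t\<in>S. A t = 0) \<or> y = 0"
  shows "convex_on S (\<lambda>t. ln (hyp1F1 (A t) (C t) y))" and "\<And>t. t \<in> S \<Longrightarrow> hyp1F1 (A t) (C t) y \<ge> 1"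
proof -
  define g where "g = (\<lambda>k t. pochhammer (A t) k / pochhammer (C t) k * y^k / fact k)"
  have hg: "hyp1F1 (A t) (C t) y = (\<Sum>k. g k t)" for t by (simp add: hyp1F1_def g_def)
  have nn: "g k t \<ge> 0" if "t \<in> S" for k t
    unfolding g_def using poch_nonneg0[OF Ap[OF that], of k] pochhammer_pos[OF Cp[OF that], of k] y
    by (intro divide_nonneg_pos mult_nonneg_nonneg divide_nonneg_pos) auto
  have sm: "summable (\<lambda>k. g k t)" if "t \<in> S" for t
    unfolding g_def by (rule summable_norm_cancel[OF term_summable[OF Cp[OF that]]])
  have ge1: "(\<Sum>k. g k t) \<ge> 1" if "t \<in> S" for t
  proof -
    have "sum (\<lambda>k. g k t) {0} \<le> (\<Sum>k. g k t)"
      by (rule sum_le_suminf[OF sm[OF that]]) (use nn that in auto)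
    thus ?thesis by (simp add: g_def)
  qed
  show "t \<in> S \<Longrightarrow> hyp1F1 (A t) (C t) y \<ge> 1" for t using ge1 hg by simp
  have lc: "(\<forall>t\<in>S. g k t = 0) \<or> ((\<forall>t\<in>S. g k t > 0) \<and> convex_on S (\<lambda>t. ln (g k t)))" for k
  proof (cases "k = 0")
    case True
    have "convex_on S (\<lambda>t. 0)" using S by (simp add: convex_on_const)
    hence "convex_on S (\<lambda>t. ln (g k t))" by (rule convex_on_cong') (simp add: g_def True)
    thus ?thesis by (simp add: g_def True)
  next
    case False
    from alt show ?thesis
    proof (elim disjE conjE)
      assume Apos: "\<forall>t\<in>S. \<forall>j. A t + real j > 0" and y0: "y > 0"
        and cv: "\<forall>j. convex_on S (\<lambda>t. ln (A t + real j) - ln (C t + real j))"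
      have "convex_on S (\<lambda>t. ln (g k t))" unfolding g_def
        by (rule term_logconv[OF S]) (use Apos Cp y0 cv in \<open>auto intro: add_pos_nonneg\<close>)
      moreover have "\<forall>t\<in>S. g k t > 0"
      proof
        fix t assume t: "t \<in> S"
        have "A t > 0" using Apos t by (metis add.right_neutral of_nat_0)
        thus "g k t > 0" unfolding g_def using pochhammer_pos[OF Cp[OF t], of k] y0
          by (auto intro!: divide_pos_pos mult_pos_pos pochhammer_pos)
      qed
      ultimately show ?thesis by simp
    next
      assume "\<forall>t\<in>S. A t = 0"
      thus ?thesis using False by (simp add: g_def pochhammer_0_left)
    next
      assume "y = 0"
      thus ?thesis using False by (simp add: g_def)
    qed
  qed
  have "convex_on S (\<lambda>t. ln (\<Sum>k. g k t))"
  proof (rule logconv_suminf[OF S nn sm _ lc])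
    fix t assume "t \<in> S"
    from ge1[OF this] show "(\<Sum>k. g k t) > 0" by linarith
  qed
  thus "convex_on S (\<lambda>t. ln (hyp1F1 (A t) (C t) y))" by (simp add: hg)
qed

lemma convex_const_minus_ln:
  fixes S :: "real set"
  assumes S: "convex S" and pos: "\<And>t. t \<in> S \<Longrightarrow> t + g > 0"
  shows "convex_on S (\<lambda>t. k - ln (t + g))"
proof -
  have "convex_on S (\<lambda>t. k + - ln (t + g))"
    by (intro convex_on_add convex_neg_ln[OF S pos]) (use S in \<open>simp_all add: convex_on_const\<close>)
  thus ?thesis by simp
qed

lemma caseB1:
  fixes a x :: real
  assumes a: "a > 0" and x: "x > 0"
  shows "convex_on {0<..} (\<lambda>c. ln (hyp1F1 a c x))" and "\<And>c. c > 0 \<Longrightarrow> hyp1F1 a c x \<ge> 1"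
proof -
  have alt: "((\<forall>t\<in>{0<..}. \<forall>j. (\<lambda>_. a) t + real j > 0) \<and> x > 0
      \<and> (\<forall>j. convex_on {0<..} (\<lambda>t. ln ((\<lambda>_. a) t + real j) - ln ((\<lambda>t. t) t + real j))))
      \<or> (\<forall>t\<in>{0<..}. (\<lambda>_. a) t = 0) \<or> x = 0"
  proof (intro disjI1 conjI allI ballI)
    fix j :: nat
    show "convex_on {0<..} (\<lambda>t. ln ((\<lambda>_. a) t + real j) - ln ((\<lambda>t. t) t + real j))"
      using convex_const_minus_ln[of "{0<..}" "real j" "ln (a + real j)"] by simp
  qed (use a x in auto)
  note H = hyp_logconv[of "{0<..}" "\<lambda>t. t" "\<lambda>_. a" x, OF _ _ _ _ alt]
  show "convex_on {0<..} (\<lambda>c. ln (hyp1F1 a c x))" using H(1) a x by simp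
  show "c > 0 \<Longrightarrow> hyp1F1 a c x \<ge> 1" for c using H(2)[of c] a x by simp
qed

lemma caseB2:
  fixes a x :: real
  assumes a: "a < 0" and x: "x < 0"
  shows "convex_on {0<..} (\<lambda>c. ln (hyp1F1 a c x))" and "\<And>c. c > 0 \<Longrightarrow> hyp1F1 a c x > 0"
proof -
  have alt: "((\<forall>t\<in>{0<..}. \<forall>j. (\<lambda>t. t - a) t + real j > 0) \<and> -x > 0
      \<and> (\<forall>j. convex_on {0<..} (\<lambda>t. ln ((\<lambda>t. t - a) t + real j) - ln ((\<lambda>t. t) t + real j))))
      \<or> (\<forall>t\<in>{0<..}. (\<lambda>t. t - a) t = 0) \<or> -x = 0"
  proof (intro disjI1 conjI allI ballI)
    fix j :: nat
    have "convex_on {0<..} (\<lambda>t. ln (t + (real j - a)) - ln (t + real j))"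
      by (rule convex_ln_ratio) (use a in auto)
    thus "convex_on {0<..} (\<lambda>t. ln ((\<lambda>t. t - a) t + real j) - ln ((\<lambda>t. t) t + real j))"
      by (simp add: algebra_simps)
  qed (use a x in auto)
  note H = hyp_logconv[of "{0<..}" "\<lambda>t. t" "\<lambda>t. t - a" "-x", OF _ _ _ _ alt]
  have H1: "convex_on {0<..} (\<lambda>c. ln (hyp1F1 (c - a) c (-x)))" using H(1) a x by simp
  have H2: "hyp1F1 (c - a) c (-x) \<ge> 1" if "c > 0" for c using H(2)[of c] a x that by simp
  have K: "hyp1F1 a c x = exp x * hyp1F1 (c - a) c (-x)" if "c > 0" for c using kummer[OF that] .
  show "c > 0 \<Longrightarrow> hyp1F1 a c x > 0" for c using K[of c] H2[of c] by simp
  have "convex_on {0<..} (\<lambda>c. x + ln (hyp1F1 (c - a) c (-x)))"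
    by (intro convex_on_add H1) (simp add: convex_on_const)
  thus "convex_on {0<..} (\<lambda>c. ln (hyp1F1 a c x))"
  proof (rule convex_on_cong')
    fix c :: real assume "c \<in> {0<..}"
    hence c: "c > 0" by simp
    show "x + ln (hyp1F1 (c - a) c (-x)) = ln (hyp1F1 a c x)"
      using K[OF c] H2[OF c] by (simp add: ln_mult)
  qed
qed

lemma caseC1:
  fixes a c x :: real
  assumes ac: "a \<ge> c" and c: "c > 0" and x: "x > 0"
  shows "convex_on {0..} (\<lambda>u. ln (hyp1F1 (a + u) (c + u) x))" and "\<And>u. u \<ge> 0 \<Longrightarrow> hyp1F1 (a + u) (c + u) x \<ge> 1"
proof -
  have alt: "((\<forall>t\<in>{0..}. \<forall>j. (\<lambda>u. a + u) t + real j > 0) \<and> x > 0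
      \<and> (\<forall>j. convex_on {0..} (\<lambda>t. ln ((\<lambda>u. a + u) t + real j) - ln ((\<lambda>u. c + u) t + real j))))
      \<or> (\<forall>t\<in>{0..}. (\<lambda>u. a + u) t = 0) \<or> x = 0"
  proof (intro disjI1 conjI allI ballI)
    fix j :: nat
    have "convex_on {0..} (\<lambda>t. ln (t + (a + real j)) - ln (t + (c + real j)))"
      by (rule convex_ln_ratio) (use ac c in auto)
    thus "convex_on {0..} (\<lambda>t. ln ((\<lambda>u. a + u) t + real j) - ln ((\<lambda>u. c + u) t + real j))"
      by (simp add: algebra_simps)
  qed (use ac c x in auto)
  note H = hyp_logconv[of "{0..}" "\<lambda>u. c + u" "\<lambda>u. a + u" x, OF _ _ _ _ alt]
  show "convex_on {0..} (\<lambda>u. ln (hyp1F1 (a + u) (c + u) x))" using H(1) ac c x by simp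
  show "u \<ge> 0 \<Longrightarrow> hyp1F1 (a + u) (c + u) x \<ge> 1" for u using H(2)[of u] ac c x by simp
qed

lemma caseC2:
  fixes a c x :: real
  assumes ac: "a \<le> c" and c: "c > 0" and x: "x \<le> 0"
  shows "convex_on {0..} (\<lambda>u. ln (hyp1F1 (a + u) (c + u) x))" and "\<And>u. u \<ge> 0 \<Longrightarrow> hyp1F1 (a + u) (c + u) x > 0"
proof -
  have alt: "((\<forall>t\<in>{0..}. \<forall>j. (\<lambda>_. c - a) t + real j > 0) \<and> -x > 0
      \<and> (\<forall>j. convex_on {0..} (\<lambda>t. ln ((\<lambda>_. c - a) t + real j) - ln ((\<lambda>u. c + u) t + real j))))
      \<or> (\<forall>t\<in>{0..}. (\<lambda>_. c - a) t = 0) \<or> -x = 0"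
  proof (cases "a = c \<or> x = 0")
    case True then show ?thesis by auto
  next
    case False
    hence ac': "a < c" and x': "x < 0" using ac x by auto
    show ?thesis
    proof (intro disjI1 conjI allI ballI)
      fix j :: nat
      have "convex_on {0..} (\<lambda>t. ln (c - a + real j) - ln (t + (c + real j)))"
        by (rule convex_const_minus_ln) (use c in auto)
      thus "convex_on {0..} (\<lambda>t. ln ((\<lambda>_. c - a) t + real j) - ln ((\<lambda>u. c + u) t + real j))"
        by (simp add: algebra_simps)
    qed (use ac' x' in auto)
  qed
  note H = hyp_logconv[of "{0..}" "\<lambda>u. c + u" "\<lambda>_. c - a" "-x", OF _ _ _ _ alt]
  have H1: "convex_on {0..} (\<lambda>u. ln (hyp1F1 (c - a) (c + u) (-x)))" using H(1) ac c x by simp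
  have H2: "hyp1F1 (c - a) (c + u) (-x) \<ge> 1" if "u \<ge> 0" for u using H(2)[of u] ac c x that by simp
  have K: "hyp1F1 (a + u) (c + u) x = exp x * hyp1F1 (c - a) (c + u) (-x)" if "u \<ge> 0" for u
  proof -
    have "c + u > 0" using c that by simp
    from kummer[OF this, of "a + u" x] show ?thesis by simp
  qed
  show "u \<ge> 0 \<Longrightarrow> hyp1F1 (a + u) (c + u) x > 0" for u using K[of u] H2[of u] by simp
  have "convex_on {0..} (\<lambda>u. x + ln (hyp1F1 (c - a) (c + u) (-x)))"
    by (intro convex_on_add H1) (simp add: convex_on_const)
  thus "convex_on {0..} (\<lambda>u. ln (hyp1F1 (a + u) (c + u) x))"
  proof (rule convex_on_cong')
    fix u :: real assume "u \<in> {0..}"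
    hence u: "u \<ge> 0" by simp
    show "x + ln (hyp1F1 (c - a) (c + u) (-x)) = ln (hyp1F1 (a + u) (c + u) x)"
      using K[OF u] H2[OF u] by (simp add: ln_mult)
  qed
qed

lemma ratio_mono:
  fixes F :: "real \<Rightarrow> real" and d :: real
  assumes cv: "convex_on {0<..} (\<lambda>c. ln (F c))" and pos: "\<And>c. c > 0 \<Longrightarrow> F c > 0" and d: "d > 0"
  shows "mono_on {0<..} (\<lambda>c. F (c + d) / F c)"
proof (rule mono_onI)
  fix r s :: real assume r: "r \<in> {0<..}" and s: "s \<in> {0<..}" and rs: "r \<le> s"
  have r0: "r > 0" and s0: "s > 0" using r s by auto
  have sh: "ln (F (r + d)) + ln (F s) \<le> ln (F r) + ln (F (s + d))"
    by (rule convex_shift[OF cv]) (use r0 s0 rs d in auto)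
  have p: "F r > 0" "F s > 0" "F (r + d) > 0" "F (s + d) > 0" using pos r0 s0 d by auto
  have "ln (F (r + d) / F r) \<le> ln (F (s + d) / F s)" using sh p by (simp add: ln_div)
  thus "F (r + d) / F r \<le> F (s + d) / F s" using p by simp
qed

lemma three_point:
  fixes F :: "real \<Rightarrow> real" and d :: real
  assumes cv: "convex_on {0..} (\<lambda>u. ln (F u))" and pos: "\<And>u. u \<ge> 0 \<Longrightarrow> F u > 0" and d: "d > 0"
  shows "(F d)^2 \<le> F (2 * d) * F 0"
proof -
  have e: "(1 - 1/2) *\<^sub>R (0::real) + (1/2) *\<^sub>R (2 * d) = d" by simp
  have "ln (F d) \<le> (1 - 1/2) * ln (F 0) + (1/2) * ln (F (2 * d))"
    using convex_onD[OF cv, of "1/2" 0 "2 * d"] d unfolding e by simp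
  hence "ln ((F d)^2) \<le> ln (F (2 * d) * F 0)" using pos[of d] pos[of 0] pos[of "2*d"] d
    by (simp add: ln_mult power2_eq_square)
  thus ?thesis using pos[of d] pos[of 0] pos[of "2*d"] d by (simp add: zero_less_mult_iff)
qed


theorem theorem5:
  fixes \<delta> :: real
  assumes "\<delta> > 0"
  shows
    \<comment> \<open>(a)\<close>
    "(\<forall>a c d. d > c \<and> c > 0 \<and> a > 0 \<longrightarrow>
        (\<exists>b :: nat \<Rightarrow> real. b 0 = 0 \<and> (\<forall>n\<ge>1. b n < 0) \<and>
           (\<forall>x. (\<lambda>n. b n * x ^ n) sums
                 (hyp1F1 a (c + \<delta>) x * hyp1F1 a d x - hyp1F1 a (d + \<delta>) x * hyp1F1 a c x))))
   \<and> \<comment> \<open>(b)\<close>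
    (\<forall>a x. (a > 0 \<and> x > 0) \<or> (a < 0 \<and> x < 0) \<longrightarrow>
        mono_on {0<..} (\<lambda>c. hyp1F1 a (c + \<delta>) x / hyp1F1 a c x) \<and>
        convex_on {0<..} (\<lambda>c. ln (hyp1F1 a c x)))
   \<and> \<comment> \<open>(c)\<close>
    (\<forall>a c x. (a \<ge> c \<and> c > 0 \<and> x > 0) \<or> (a \<le> c \<and> c > 0 \<and> x \<le> 0) \<longrightarrow>
        (hyp1F1 (a + \<delta>) (c + \<delta>) x)\<^sup>2 \<le> hyp1F1 (a + 2 * \<delta>) (c + 2 * \<delta>) x * hyp1F1 a c x \<and>
        convex_on {0..} (\<lambda>\<mu>. ln (hyp1F1 (a + \<mu>) (c + \<mu>) x)))
   \<and> \<comment> \<open>(d)\<close>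
    (\<forall>a c d (m::nat). a > 0 \<and> m \<ge> 1 \<longrightarrow>
        (c > d \<and> d > 0 \<longrightarrow> hyp4F3_d a c d m > 0) \<and>
        (d > c \<and> c > 0 \<longrightarrow> hyp4F3_d a c d m < 0))"
proof -
  have dl: "\<delta> > 0" by fact
  have A: "\<forall>a c d. d > c \<and> c > 0 \<and> a > 0 \<longrightarrow>
        (\<exists>b :: nat \<Rightarrow> real. b 0 = 0 \<and> (\<forall>n\<ge>1. b n < 0) \<and>
           (\<forall>x. (\<lambda>n. b n * x ^ n) sums
                 (hyp1F1 a (c + \<delta>) x * hyp1F1 a d x - hyp1F1 a (d + \<delta>) x * hyp1F1 a c x)))"
  proof (intro allI impI)
    fix a c d :: real assume h: "d > c \<and> c > 0 \<and> a > 0"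
    hence a: "a > 0" and c: "c > 0" and cd: "c < d" and d: "d > 0" by auto
    have "coef a c d \<delta> 0 = 0" by (rule coef0)
    moreover have "\<forall>n\<ge>1. coef a c d \<delta> n < 0" using coef_neg[OF a c cd dl] by auto
    moreover have "\<forall>x. (\<lambda>n. coef a c d \<delta> n * x ^ n) sums
                 (hyp1F1 a (c + \<delta>) x * hyp1F1 a d x - hyp1F1 a (d + \<delta>) x * hyp1F1 a c x)"
      using coef_sums[OF c d dl] by auto
    ultimately show "\<exists>b :: nat \<Rightarrow> real. b 0 = 0 \<and> (\<forall>n\<ge>1. b n < 0) \<and>
           (\<forall>x. (\<lambda>n. b n * x ^ n) sums
                 (hyp1F1 a (c + \<delta>) x * hyp1F1 a d x - hyp1F1 a (d + \<delta>) x * hyp1F1 a c x))"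
      by blast
  qed
  have B: "\<forall>a x. (a > 0 \<and> x > 0) \<or> (a < 0 \<and> x < 0) \<longrightarrow>
        mono_on {0<..} (\<lambda>c. hyp1F1 a (c + \<delta>) x / hyp1F1 a c x) \<and>
        convex_on {0<..} (\<lambda>c. ln (hyp1F1 a c x))"
  proof (intro allI impI)
    fix a x :: real assume h: "(a > 0 \<and> x > 0) \<or> (a < 0 \<and> x < 0)"
    have cv: "convex_on {0<..} (\<lambda>c. ln (hyp1F1 a c x))"
      and pos: "\<And>c. c > 0 \<Longrightarrow> hyp1F1 a c x > 0"
    proof -
      show "convex_on {0<..} (\<lambda>c. ln (hyp1F1 a c x))"
        using h caseB1 caseB2 by blast
      show "c > 0 \<Longrightarrow> hyp1F1 a c x > 0" for c
      proof -
        assume c: "c > 0"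
        show ?thesis
        proof (cases "a > 0 \<and> x > 0")
          case True
          then have "hyp1F1 a c x \<ge> 1" using caseB1(2)[of a x c] c by auto
          then show ?thesis by linarith
        next
          case False
          then have "a < 0" "x < 0" using h by auto
          then show ?thesis using caseB2(2) c by blast
        qed
      qed
    qed
    show "mono_on {0<..} (\<lambda>c. hyp1F1 a (c + \<delta>) x / hyp1F1 a c x) \<and>
        convex_on {0<..} (\<lambda>c. ln (hyp1F1 a c x))"
      using ratio_mono[of "\<lambda>c. hyp1F1 a c x", OF cv pos dl] cv by simp
  qed
  have C: "\<forall>a c x. (a \<ge> c \<and> c > 0 \<and> x > 0) \<or> (a \<le> c \<and> c > 0 \<and> x \<le> 0) \<longrightarrow>
        (hyp1F1 (a + \<delta>) (c + \<delta>) x)\<^sup>2 \<le> hyp1F1 (a + 2 * \<delta>) (c + 2 * \<delta>) x * hyp1F1 a c x \<and>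
        convex_on {0..} (\<lambda>\<mu>. ln (hyp1F1 (a + \<mu>) (c + \<mu>) x))"
  proof (intro allI impI)
    fix a c x :: real assume h: "(a \<ge> c \<and> c > 0 \<and> x > 0) \<or> (a \<le> c \<and> c > 0 \<and> x \<le> 0)"
    have cv: "convex_on {0..} (\<lambda>u. ln (hyp1F1 (a + u) (c + u) x))"
      and pos: "\<And>u. u \<ge> 0 \<Longrightarrow> hyp1F1 (a + u) (c + u) x > 0"
    proof -
      show "convex_on {0..} (\<lambda>u. ln (hyp1F1 (a + u) (c + u) x))"
        using h caseC1 caseC2 by blast
      show "u \<ge> 0 \<Longrightarrow> hyp1F1 (a + u) (c + u) x > 0" for u
      proof -
        assume u: "u \<ge> 0"
        show ?thesis
        proof (cases "a \<ge> c \<and> c > 0 \<and> x > 0")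
          case True
          then have "hyp1F1 (a + u) (c + u) x \<ge> 1" using caseC1(2)[of c a x u] u by auto
          then show ?thesis by linarith
        next
          case False
          then have "a \<le> c" "c > 0" "x \<le> 0" using h by auto
          then show ?thesis using caseC2(2) u by blast
        qed
      qed
    qed
    have "(hyp1F1 (a + \<delta>) (c + \<delta>) x)\<^sup>2 \<le> hyp1F1 (a + 2 * \<delta>) (c + 2 * \<delta>) x * hyp1F1 (a + 0) (c + 0) x"
      using three_point[of "\<lambda>u. hyp1F1 (a + u) (c + u) x", OF cv pos dl] by simp
    then show "(hyp1F1 (a + \<delta>) (c + \<delta>) x)\<^sup>2 \<le> hyp1F1 (a + 2 * \<delta>) (c + 2 * \<delta>) x * hyp1F1 a c x \<and>
        convex_on {0..} (\<lambda>\<mu>. ln (hyp1F1 (a + \<mu>) (c + \<mu>) x))"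
      using cv by simp
  qed
  have D: "\<forall>a c d (m::nat). a > 0 \<and> m \<ge> 1 \<longrightarrow>
        (c > d \<and> d > 0 \<longrightarrow> hyp4F3_d a c d m > 0) \<and>
        (d > c \<and> c > 0 \<longrightarrow> hyp4F3_d a c d m < 0)"
    using part_d by blast
  show ?thesis using A B C D by blast
qed

end
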